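(* Let $(p,f)$ be an SCF-RT that is rationalizable within the class of Fechnerian RUM-CFs. Let $(x,y)\in C\setminus D$ and suppose there exists $z\in X$ with $(x,z),(y,z)\in D$. Then there is a number $\bar p(x,y)$ such that every Fechnerian RUM-CF rationalizing $(p,f)$ satisfies $G(y,x)(0)=\bar p(x,y)$. Moreover, if $p(x,z)\geq p(y,z)$, then $\bar p(x,y)=p(x,z)\,F(x,z)(\theta(y,z))$ if $p(y,z)>1/2$; $\bar p(x,y)=p(x,z)$ if $p(y,z)=1/2$; and $\bar p(x,y)=1-p(z,x)\,F(z,x)(\theta(z,y))$ if $p(y,z)<1/2$.
   Context: $X$ is a finite set of options; $C=\{(x,y): x,y\in X,\ x\neq y\}$; $D\subseteq C$ is a fixed non-empty set with $(x,y)\in D\Rightarrow (y,x)\in D$. An SCF $p$ assigns to each $(x,y)\in D$ a number $p(x,y)>0$ with $p(x,y)+p(y,x)=1$. An SCF-RT is a pair $(p,f)$ where $p$ is an SCF and $f$ assigns to each $(x,y)\in D$ a strictly positive density $f(x,y)$ on $\mathbb{R}^+$ with cdf $F(x,y)$. A RUM is a pair $(u,g)$ with $u:X\to\mathbb{R}$ and $g$ assigning to each $(x,y)\in C$ a density $g(x,y)$ on $\mathbb{R}$ (cdf $G(x,y)$) with $\int v\,g(x,y)(v)\,dv=u(x)-u(y)=:v(x,y)$, $g(x,y)(v)=g(y,x)(-v)$ for all $v$, and connected support. A RUM-CF is $(u,g,r)$ with $(u,g)$ a RUM and $r:\mathbb{R}^{++}\to\mathbb{R}^+$ continuous, strictly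 decreasing where $r(v)>0$, $\lim_{v\to0}r(v)=\infty$, $\lim_{v\to\infty}r(v)=0$; $r^{-1}(t)$ ($t>0$) is the inverse of $r$ restricted to $\{r>0\}$. It rationalizes $(p,f)$ if for all $(x,y)\in D$: $G(x,y)(0)=p(y,x)$ and $\frac{1-G(x,y)(r^{-1}(t))}{1-G(x,y)(0)}=F(x,y)(t)$ for all $t>0$. A RUM-CF is Fechnerian if there is a density $g$ on $\mathbb{R}$ with $g(\delta)=g(-\delta)>0$ for all $\delta\geq0$ such that $g(x,y)(v)=g(v-v(x,y))$ for all $(x,y)\in C$, $v\in\mathbb{R}$. For $(a,b)\in D$ with $p(a,b)>p(b,a)$, $\theta(a,b)>0$ is defined by $F(a,b)(\theta(a,b))=\frac{1}{2p(a,b)}$. *)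

theory Defs
  imports "HOL-Analysis.Analysis"
begin

definition Cset :: "'a set \<Rightarrow> ('a \<times> 'a) set" where
  "Cset X = {(x, y). x \<in> X \<and> y \<in> X \<and> x \<noteq> y}"

definition domain_ok :: "'a set \<Rightarrow> ('a \<times> 'a) set \<Rightarrow> bool" where
  "domain_ok X D \<longleftrightarrow> finite X \<and> D \<subseteq> Cset X \<and> D \<noteq> {} \<and>
     (\<forall>x y. (x, y) \<in> D \<longrightarrow> (y, x) \<in> D)"

definition dens_pos :: "(real \<Rightarrow> real) \<Rightarrow> bool" where
  "dens_pos h \<longleftrightarrow> h \<in> borel_measurable lborel \<and> (\<forall>t>0. 0 < h t) \<and>
     set_integrable lborel {0<..} h \<and> (LINT t:{0<..}|lborel. h t) = 1"

definition cdf_pos :: "(real \<Rightarrow> real) \<Rightarrow> real \<Rightarrow> real" where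
  "cdf_pos h t = (LINT s:{0<..t}|lborel. h s)"

definition dens_R :: "(real \<Rightarrow> real) \<Rightarrow> bool" where
  "dens_R h \<longleftrightarrow> h \<in> borel_measurable lborel \<and> (\<forall>v. 0 \<le> h v) \<and>
     integrable lborel h \<and> (\<integral>v. h v \<partial>lborel) = 1"

definition cdf_R :: "(real \<Rightarrow> real) \<Rightarrow> real \<Rightarrow> real" where
  "cdf_R h v = (LINT s:{..v}|lborel. h s)"

definition SCF :: "('a \<times> 'a) set \<Rightarrow> ('a \<Rightarrow> 'a \<Rightarrow> real) \<Rightarrow> bool" where
  "SCF D p \<longleftrightarrow> (\<forall>(x, y)\<in>D. 0 < p x y \<and> p x y + p y x = 1)"

definition SCF_RT :: "('a \<times> 'a) set \<Rightarrow> ('a \<Rightarrow> 'a \<Rightarrow> real) \<Rightarrow>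
    ('a \<Rightarrow> 'a \<Rightarrow> real \<Rightarrow> real) \<Rightarrow> bool" where
  "SCF_RT D p f \<longleftrightarrow> SCF D p \<and> (\<forall>(x, y)\<in>D. dens_pos (f x y))"

definition RUM :: "'a set \<Rightarrow> ('a \<Rightarrow> real) \<Rightarrow> ('a \<Rightarrow> 'a \<Rightarrow> real \<Rightarrow> real) \<Rightarrow> bool" where
  "RUM X u g \<longleftrightarrow> (\<forall>(x, y)\<in>Cset X.
      dens_R (g x y) \<and>
      integrable lborel (\<lambda>v. v * g x y v) \<and>
      (\<integral>v. v * g x y v \<partial>lborel) = u x - u y \<and>
      (\<forall>v. g x y v = g y x (- v)) \<and>
      connected (closure {v. 0 < g x y v}))"

definition CF :: "(real \<Rightarrow> real) \<Rightarrow> bool" where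
  "CF r \<longleftrightarrow> continuous_on {0<..} r \<and> (\<forall>v>0. 0 \<le> r v) \<and>
     (\<forall>v w. 0 < v \<longrightarrow> v < w \<longrightarrow> 0 < r v \<longrightarrow> 0 < r w \<longrightarrow> r w < r v) \<and>
     filterlim r at_top (at_right 0) \<and> (r \<longlongrightarrow> 0) at_top"

definition rinv :: "(real \<Rightarrow> real) \<Rightarrow> real \<Rightarrow> real" where
  "rinv r t = (THE v. 0 < v \<and> 0 < r v \<and> r v = t)"

definition RUM_CF :: "'a set \<Rightarrow> ('a \<Rightarrow> real) \<Rightarrow> ('a \<Rightarrow> 'a \<Rightarrow> real \<Rightarrow> real) \<Rightarrow>
    (real \<Rightarrow> real) \<Rightarrow> bool" where
  "RUM_CF X u g r \<longleftrightarrow> RUM X u g \<and> CF r"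

definition rationalizes :: "'a set \<Rightarrow> ('a \<times> 'a) set \<Rightarrow> ('a \<Rightarrow> real) \<Rightarrow>
    ('a \<Rightarrow> 'a \<Rightarrow> real \<Rightarrow> real) \<Rightarrow> (real \<Rightarrow> real) \<Rightarrow>
    ('a \<Rightarrow> 'a \<Rightarrow> real) \<Rightarrow> ('a \<Rightarrow> 'a \<Rightarrow> real \<Rightarrow> real) \<Rightarrow> bool" where
  "rationalizes X D u g r p f \<longleftrightarrow> RUM_CF X u g r \<and>
     (\<forall>(x, y)\<in>D. cdf_R (g x y) 0 = p y x \<and>
        (\<forall>t>0. (1 - cdf_R (g x y) (rinv r t)) / (1 - cdf_R (g x y) 0)
               = cdf_pos (f x y) t))"

definition fechnerian :: "'a set \<Rightarrow> ('a \<Rightarrow> real) \<Rightarrow> ('a \<Rightarrow> 'a \<Rightarrow> real \<Rightarrow> real) \<Rightarrow> bool" where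
  "fechnerian X u g \<longleftrightarrow> (\<exists>g0. dens_R g0 \<and> (\<forall>\<delta>\<ge>0. g0 \<delta> = g0 (- \<delta>) \<and> 0 < g0 \<delta>) \<and>
     (\<forall>(x, y)\<in>Cset X. \<forall>v. g x y v = g0 (v - (u x - u y))))"

definition theta :: "('a \<Rightarrow> 'a \<Rightarrow> real) \<Rightarrow> ('a \<Rightarrow> 'a \<Rightarrow> real \<Rightarrow> real) \<Rightarrow> 'a \<Rightarrow> 'a \<Rightarrow> real" where
  "theta p f a b = (THE t. 0 < t \<and> cdf_pos (f a b) t = 1 / (2 * p a b))"

end

theory Submission
  imports Defs
begin


lemma shift_cdf: "cdf_R (\<lambda>v. g0 (v - c)) w = cdf_R g0 (w - c)"
  unfolding cdf_R_def set_lebesgue_integral_def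
  by (subst lborel_integral_real_affine[where c=1 and t=c])
     (auto intro!: Bochner_Integration.integral_cong split: split_indicator)

lemma pos_int:
  fixes h :: "real \<Rightarrow> real"
  assumes "set_integrable lborel {a<..b} h" "a < b" "\<And>x. x \<in> {a<..b} \<Longrightarrow> 0 < h x"
  shows "0 < (LINT x:{a<..b}|lborel. h x)"
proof -
  have int: "integrable lborel (\<lambda>x. indicator {a<..b} x * h x)"
    using assms(1) unfolding set_integrable_def by simp
  have nn: "AE x in lborel. 0 \<le> indicator {a<..b} x * h x"
    using assms(3) by (auto split: split_indicator intro!: less_imp_le)
  have ge: "0 \<le> (LINT x:{a<..b}|lborel. h x)"
    unfolding set_lebesgue_integral_def using nn by (auto intro!: integral_nonneg_AE)
  moreover have "(LINT x:{a<..b}|lborel. h x) \<noteq> 0"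
  proof
    assume "(LINT x:{a<..b}|lborel. h x) = 0"
    then have "AE x in lborel. indicator {a<..b} x * h x = 0"
      using integral_nonneg_eq_0_iff_AE[OF int nn] unfolding set_lebesgue_integral_def by simp
    then have "AE x in lborel. x \<notin> {a<..b}"
      by (rule eventually_mono) (use assms(3) in \<open>fastforce split: split_indicator\<close>)
    then have "emeasure lborel {a<..b} = 0"
      by (subst (asm) AE_iff_measurable[where N="{a<..b}"]) auto
    with assms(2) show False by simp
  qed
  ultimately show ?thesis by simp
qed

lemma dens_R_si:
  assumes "dens_R g0" "A \<in> sets borel"
  shows "set_integrable lborel A g0"
  using assms unfolding dens_R_def set_integrable_def
  by (intro integrable_mult_indicator) auto

lemma Phi_diff:
  assumes "dens_R g0" "a \<le> b"
  shows "cdf_R g0 b = cdf_R g0 a + (LINT x:{a<..b}|lborel. g0 x)"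
proof -
  have "cdf_R g0 b = (LINT x:{..a} \<union> {a<..b}|lborel. g0 x)"
    unfolding cdf_R_def using assms(2) by (simp add: ivl_disj_un)
  also have "\<dots> = cdf_R g0 a + (LINT x:{a<..b}|lborel. g0 x)"
    unfolding cdf_R_def
    by (rule set_integral_Un) (auto intro!: dens_R_si[OF assms(1)])
  finally show ?thesis .
qed

lemma Phi_nonneg:
  assumes "dens_R g0"
  shows "0 \<le> cdf_R g0 w"
  using assms unfolding cdf_R_def dens_R_def set_lebesgue_integral_def
  by (auto intro!: integral_nonneg)

lemma Phi_strict:
  assumes "dens_R g0" "\<And>v. 0 < g0 v" "a < b"
  shows "cdf_R g0 a < cdf_R g0 b"
  using Phi_diff[OF assms(1), of a b] pos_int[of a b g0] assms dens_R_si[OF assms(1), of "{a<..b}"]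
  by auto

lemma Phi_mono:
  assumes "dens_R g0" "\<And>v. 0 < g0 v" "a \<le> b"
  shows "cdf_R g0 a \<le> cdf_R g0 b"
  using Phi_strict[OF assms(1,2), of a b] assms(3) by (cases "a = b") auto

lemma Phi_sym:
  assumes "dens_R g0" "\<And>v. g0 (- v) = g0 v"
  shows "cdf_R g0 (- w) = 1 - cdf_R g0 w"
proof -
  have "cdf_R g0 (- w) = (\<integral>x. indicator {w..} x * g0 x \<partial>lborel)"
    unfolding cdf_R_def set_lebesgue_integral_def
    by (subst lborel_integral_real_affine[where c="-1" and t=0])
       (auto simp: assms(2) intro!: Bochner_Integration.integral_cong split: split_indicator)
  also have "\<dots> = (\<integral>x. indicator {w<..} x * g0 x \<partial>lborel)"
    using assms(1) unfolding dens_R_def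
    by (intro integral_cong_AE) (auto intro!: eventually_mono[OF AE_lborel_singleton[of w]] split: split_indicator)
  also have "\<dots> = (LINT x:{w<..}|lborel. g0 x)"
    unfolding set_lebesgue_integral_def by simp
  finally have 1: "cdf_R g0 (- w) = (LINT x:{w<..}|lborel. g0 x)" .
  have "1 = (LINT x:{..w} \<union> {w<..}|lborel. g0 x)"
  proof -
    have "{..w} \<union> {w<..} = (UNIV::real set)" by auto
    then show ?thesis using assms(1) unfolding dens_R_def set_lebesgue_integral_def by simp
  qed
  also have "\<dots> = cdf_R g0 w + (LINT x:{w<..}|lborel. g0 x)"
    unfolding cdf_R_def
    by (rule set_integral_Un) (auto intro!: dens_R_si[OF assms(1)])
  finally show ?thesis using 1 by simp
qed

lemma F_strict:
  assumes "dens_pos h" "0 < a" "a < b"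
  shows "cdf_pos h a < cdf_pos h b"
proof -
  have si: "set_integrable lborel {0<..} h" using assms(1) unfolding dens_pos_def by simp
  have "cdf_pos h b = (LINT x:{0<..a} \<union> {a<..b}|lborel. h x)"
    unfolding cdf_pos_def using assms by (simp add: ivl_disj_un)
  also have "\<dots> = cdf_pos h a + (LINT x:{a<..b}|lborel. h x)"
    unfolding cdf_pos_def
    by (rule set_integral_Un) (use assms(2) in \<open>auto intro!: set_integrable_subset[OF si]\<close>)
  moreover have "\<And>x. x \<in> {a<..b} \<Longrightarrow> 0 < h x"
    using assms unfolding dens_pos_def by auto
  moreover have "{a<..b} \<subseteq> {0<..}" using assms(2) by auto
  ultimately show ?thesis
    using pos_int[of a b h] assms(3) set_integrable_subset[OF si, of "{a<..b}"]
    by auto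
qed

lemma F_small:
  assumes "dens_pos h" "0 < c"
  shows "\<exists>t>0. cdf_pos h t < c"
proof -
  have si: "set_integrable lborel {0<..} h" and hm: "h \<in> borel_measurable lborel"
    and hp: "\<And>t. t > 0 \<Longrightarrow> 0 < h t"
    using assms(1) unfolding dens_pos_def by auto
  let ?s = "\<lambda>n::nat. \<lambda>x. indicator {0<..1 / real (Suc n)} x * h x"
  have w: "integrable lborel (\<lambda>x. indicator {0<..} x * h x)"
    using si unfolding set_integrable_def by simp
  have sm: "?s i \<in> borel_measurable lborel" for i using hm by simp
  have bd: "AE x in lborel. norm (?s i x) \<le> indicator {0<..} x * h x" for i
    using hp by (auto split: split_indicator intro!: AE_I2 less_imp_le)
  have pt: "AE x in lborel. (\<lambda>i. ?s i x) \<longlonglongrightarrow> 0"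
  proof (rule AE_I2)
    fix x :: real
    show "(\<lambda>i. ?s i x) \<longlonglongrightarrow> 0"
    proof (cases "x > 0")
      case True
      then obtain N where N: "inverse (real (Suc N)) < x" using reals_Archimedean by blast
      have "\<forall>n\<ge>N. ?s n x = 0"
      proof (intro allI impI)
        fix n assume "N \<le> n"
        then have "1 / real (Suc n) \<le> 1 / real (Suc N)" by (simp add: frac_le)
        then have "\<not> x \<le> 1 / real (Suc n)" using N by (simp add: inverse_eq_divide)
        then show "?s n x = 0" by (simp split: split_indicator)
      qed
      then show ?thesis by (intro tendsto_eventually) (auto simp: eventually_sequentially)
    next
      case False
      then show ?thesis by (simp split: split_indicator)
    qed
  qed
  have lim: "(\<lambda>n. integral\<^sup>L lborel (?s n)) \<longlonglongrightarrow> integral\<^sup>L lborel (\<lambda>x::real. 0::real)"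
    by (rule integral_dominated_convergence[OF _ sm w pt bd]) simp
  then have "eventually (\<lambda>n. integral\<^sup>L lborel (?s n) < c) sequentially"
    using assms(2) by (intro order_tendstoD(2)) auto
  then obtain n where "integral\<^sup>L lborel (?s n) < c" by (auto simp: eventually_sequentially)
  then show ?thesis unfolding cdf_pos_def set_lebesgue_integral_def
    by (intro exI[of _ "1 / real (Suc n)"]) auto
qed

lemma rinv_eq:
  assumes "CF r" "0 < w" "0 < r w"
  shows "rinv r (r w) = w"
  unfolding rinv_def
proof (rule the_equality)
  show "0 < w \<and> 0 < r w \<and> r w = r w" using assms by simp
  fix v assume v: "0 < v \<and> 0 < r v \<and> r v = r w"
  have dec: "\<And>v w. 0 < v \<Longrightarrow> v < w \<Longrightarrow> 0 < r v \<Longrightarrow> 0 < r w \<Longrightarrow> r w < r v"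
    using assms(1) unfolding CF_def by blast
  show "v = w"
  proof (rule ccontr)
    assume "v \<noteq> w"
    then consider "v < w" | "w < v" by linarith
    then show False
      using dec[of v w] dec[of w v] v assms by cases auto
  qed
qed

lemma r_pos:
  fixes Phi :: "real \<Rightarrow> real"
  assumes cf: "CF r" and h: "dens_pos h" and P: "0 < P"
    and eq: "\<And>t. 0 < t \<Longrightarrow> Phi (c - rinv r t) = P * cdf_pos h t"
    and mono: "\<And>a b. a \<le> b \<Longrightarrow> Phi a \<le> Phi b"
    and pos: "0 < Phi (c - v0)" and v0: "0 < v0"
  shows "0 < r v0"
proof (rule ccontr)
  assume "\<not> 0 < r v0"
  moreover have "0 \<le> r v0" using cf v0 unfolding CF_def by auto
  ultimately have r0: "r v0 = 0" by simp
  obtain t where t: "0 < t" "cdf_pos h t < Phi (c - v0) / P"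
    using F_small[OF h, of "Phi (c - v0) / P"] pos P by auto
  have "filterlim r at_top (at_right 0)" using cf unfolding CF_def by simp
  then have "eventually (\<lambda>v. t < r v) (at_right (0::real))"
    unfolding filterlim_at_top_dense by simp
  then obtain b where b: "b > 0" "\<And>y. 0 < y \<Longrightarrow> y < b \<Longrightarrow> t < r y"
    unfolding eventually_at_right_field by auto
  define e where "e = min (b/2) (v0/2)"
  have e: "0 < e" "e < b" "e \<le> v0" using b v0 unfolding e_def by auto
  have "continuous_on {e..v0} r"
    using cf e unfolding CF_def by (auto elim!: continuous_on_subset)
  then obtain w where w: "e \<le> w" "w \<le> v0" "r w = t"
    using IVT2'[of r v0 t e] r0 t(1) b(2)[of e] e by auto
  have rw: "rinv r t = w" using rinv_eq[OF cf, of w] w e t by auto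
  have "Phi (c - v0) \<le> Phi (c - w)" using mono w by simp
  also have "\<dots> = P * cdf_pos h t" using eq[OF t(1)] rw by simp
  also have "\<dots> < Phi (c - v0)" using t(2) P by (simp add: field_simps)
  finally show False by simp
qed

lemma main:
  assumes dom: "domain_ok X D" and rt: "SCF_RT D p f"
    and rat: "rationalizes X D u g r p f" and fech: "fechnerian X u g"
    and yx: "(y, x) \<in> Cset X" and xz: "(x, z) \<in> D" and yz: "(y, z) \<in> D"
  shows "cdf_R (g y x) 0 =
    (if p y z > 1/2 then p x z * cdf_pos (f x z) (theta p f y z)
     else if p y z = 1/2 then p x z
     else 1 - p z x * cdf_pos (f z x) (theta p f z y))"
proof -
  obtain g0 where g0: "dens_R g0" and g0s: "\<forall>\<delta>\<ge>0. g0 \<delta> = g0 (- \<delta>) \<and> 0 < g0 \<delta>"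
    and gg: "\<forall>(a, b)\<in>Cset X. \<forall>v. g a b v = g0 (v - (u a - u b))"
    using fech unfolding fechnerian_def by blast
  have sym: "g0 (- v) = g0 v" for v
  proof (cases "v \<ge> 0")
    case True then show ?thesis using g0s by auto
  next
    case False then have "- v \<ge> 0" by simp
    then show ?thesis using g0s by (metis minus_minus)
  qed
  have gpos: "0 < g0 v" for v
  proof (cases "v \<ge> 0")
    case True then show ?thesis using g0s by auto
  next
    case False then have "- v \<ge> 0" by simp
    then show ?thesis using g0s sym[of v] by metis
  qed
  define Phi where "Phi = cdf_R g0"
  have Psym: "Phi (- w) = 1 - Phi w" for w unfolding Phi_def by (rule Phi_sym[OF g0 sym])
  have Pstrict: "a < b \<Longrightarrow> Phi a < Phi b" for a b unfolding Phi_def by (rule Phi_strict[OF g0 gpos])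
  have Pmono: "a \<le> b \<Longrightarrow> Phi a \<le> Phi b" for a b unfolding Phi_def by (rule Phi_mono[OF g0 gpos])
  have P0: "Phi 0 = 1/2" using Psym[of 0] by simp
  have DC: "(a, b) \<in> D \<Longrightarrow> (a, b) \<in> Cset X" for a b using dom unfolding domain_ok_def by auto
  have Dsym: "(a, b) \<in> D \<Longrightarrow> (b, a) \<in> D" for a b using dom unfolding domain_ok_def by auto
  have cdfg: "(a, b) \<in> Cset X \<Longrightarrow> cdf_R (g a b) w = Phi (w - (u a - u b))" for a b w
  proof -
    assume "(a, b) \<in> Cset X"
    then have "g a b = (\<lambda>v. g0 (v - (u a - u b)))" using gg by (fastforce intro!: ext)
    then show ?thesis unfolding Phi_def by (simp add: shift_cdf)
  qed
  have scf: "(a, b) \<in> D \<Longrightarrow> 0 < p a b \<and> p a b + p b a = 1" for a b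
    using rt unfolding SCF_RT_def SCF_def by auto
  have fd: "(a, b) \<in> D \<Longrightarrow> dens_pos (f a b)" for a b
    using rt unfolding SCF_RT_def by auto
  have ratD: "(a, b) \<in> D \<Longrightarrow> cdf_R (g a b) 0 = p b a \<and>
        (\<forall>t>0. (1 - cdf_R (g a b) (rinv r t)) / (1 - cdf_R (g a b) 0) = cdf_pos (f a b) t)" for a b
    using rat unfolding rationalizes_def by auto
  have cf: "CF r" using rat unfolding rationalizes_def RUM_CF_def by simp
  have pD: "(a, b) \<in> D \<Longrightarrow> Phi (u a - u b) = p a b" for a b
  proof -
    assume ab: "(a, b) \<in> D"
    have "Phi (- (u a - u b)) = p b a" using ratD[OF ab] cdfg[OF DC[OF ab], of 0] by simp
    then show ?thesis using Psym[of "u a - u b"] scf[OF ab] by simp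
  qed
  have EqD: "(a, b) \<in> D \<Longrightarrow> 0 < t \<Longrightarrow> Phi (u a - u b - rinv r t) = p a b * cdf_pos (f a b) t" for a b t
  proof -
    assume ab: "(a, b) \<in> D" and t: "0 < t"
    have e: "(1 - cdf_R (g a b) (rinv r t)) / (1 - cdf_R (g a b) 0) = cdf_pos (f a b) t"
      using ratD[OF ab] t by auto
    have n: "1 - cdf_R (g a b) (rinv r t) = Phi (u a - u b - rinv r t)"
      using cdfg[OF DC[OF ab], of "rinv r t"] Psym[of "u a - u b - rinv r t"] by simp
    have d: "1 - cdf_R (g a b) 0 = p a b"
      using cdfg[OF DC[OF ab], of 0] Psym[of "u a - u b"] pD[OF ab] by simp
    show ?thesis using e n d scf[OF ab] by (simp add: field_simps)
  qed
  have EqS: "(a, b) \<in> D \<Longrightarrow> 0 < s \<Longrightarrow> 0 < r s \<Longrightarrow> Phi (u a - u b - s) = p a b * cdf_pos (f a b) (r s)" for a b s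
    using EqD[of a b "r s"] rinv_eq[OF cf, of s] by simp
  have th: "(a, b) \<in> D \<Longrightarrow> p a b > 1/2 \<Longrightarrow>
      0 < u a - u b \<and> 0 < r (u a - u b) \<and> theta p f a b = r (u a - u b)" for a b
  proof -
    assume ab: "(a, b) \<in> D" and pg: "p a b > 1/2"
    define v where "v = u a - u b"
    have vp: "0 < v"
    proof (rule ccontr)
      assume "\<not> 0 < v"
      then have "Phi v \<le> Phi 0" using Pmono by simp
      then show False using pD[OF ab] pg P0 unfolding v_def by simp
    qed
    have rp: "0 < r v"
      by (rule r_pos[OF cf fd[OF ab], of "p a b" Phi v]) (use scf[OF ab] EqD[OF ab] Pmono P0 vp in \<open>auto simp: v_def\<close>)
    have Fv: "cdf_pos (f a b) (r v) = 1 / (2 * p a b)"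
      using EqS[OF ab vp rp] P0 scf[OF ab] unfolding v_def by (simp add: field_simps)
    have "theta p f a b = r v"
      unfolding theta_def
    proof (rule the_equality)
      show "0 < r v \<and> cdf_pos (f a b) (r v) = 1 / (2 * p a b)" using rp Fv by simp
      fix t assume t: "0 < t \<and> cdf_pos (f a b) t = 1 / (2 * p a b)"
      show "t = r v"
      proof (rule ccontr)
        assume "t \<noteq> r v"
        then consider "t < r v" | "r v < t" by linarith
        then show False
          using F_strict[OF fd[OF ab], of t "r v"] F_strict[OF fd[OF ab], of "r v" t] t rp Fv by cases auto
      qed
    qed
    then show ?thesis using vp rp unfolding v_def by simp
  qed
  have goal: "cdf_R (g y x) 0 = Phi (u x - u y)" using cdfg[OF yx, of 0] by simp
  show ?thesis
  proof (cases "p y z > 1/2")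
    case True
    note T = th[OF yz True]
    have "Phi (u x - u z - (u y - u z)) = p x z * cdf_pos (f x z) (r (u y - u z))"
      using EqS[OF xz] T by blast
    then show ?thesis using goal T True by simp
  next
    case F1: False
    show ?thesis
    proof (cases "p y z = 1/2")
      case True
      have "u y - u z = 0"
      proof (rule ccontr)
        assume "u y - u z \<noteq> 0"
        then consider "u y - u z < 0" | "0 < u y - u z" by linarith
        then show False using Pstrict[of "u y - u z" 0] Pstrict[of 0 "u y - u z"] pD[OF yz] True P0
          by cases auto
      qed
      then have "u x - u y = u x - u z" by simp
      then show ?thesis using goal pD[OF xz] True by simp
    next
      case F2: False
      have zy: "(z, y) \<in> D" and zx: "(z, x) \<in> D" using Dsym yz xz by auto
      have "p z y > 1/2" using scf[OF yz] F1 F2 by simp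
      note T = th[OF zy this]
      have "Phi (u z - u x - (u z - u y)) = p z x * cdf_pos (f z x) (r (u z - u y))"
        using EqS[OF zx] T by blast
      moreover have "Phi (u x - u y) = 1 - Phi (u y - u x)" using Psym[of "u y - u x"] by simp
      ultimately show ?thesis using goal T F1 F2 by simp
    qed
  qed
qed


theorem theorem3:
  fixes X :: "'a set" and D :: "('a \<times> 'a) set"
    and p :: "'a \<Rightarrow> 'a \<Rightarrow> real" and f :: "'a \<Rightarrow> 'a \<Rightarrow> real \<Rightarrow> real"
    and x y z :: 'a
  assumes dom: "domain_ok X D"
    and rt: "SCF_RT D p f"
    and ratbl: "\<exists>u g r. rationalizes X D u g r p f \<and> fechnerian X u g"
    and xy: "(x, y) \<in> Cset X - D"
    and zX: "z \<in> X" and xz: "(x, z) \<in> D" and yz: "(y, z) \<in> D"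
  shows "\<exists>pbar. (\<forall>u g r. rationalizes X D u g r p f \<and> fechnerian X u g
                      \<longrightarrow> cdf_R (g y x) 0 = pbar) \<and>
           (p x z \<ge> p y z \<longrightarrow>
              (p y z > 1/2 \<longrightarrow> pbar = p x z * cdf_pos (f x z) (theta p f y z)) \<and>
              (p y z = 1/2 \<longrightarrow> pbar = p x z) \<and>
              (p y z < 1/2 \<longrightarrow> pbar = 1 - p z x * cdf_pos (f z x) (theta p f z y)))"
proof (intro exI conjI)
  define pb where "pb = (if p y z > 1/2 then p x z * cdf_pos (f x z) (theta p f y z)
     else if p y z = 1/2 then p x z
     else 1 - p z x * cdf_pos (f z x) (theta p f z y))"
  have yx: "(y, x) \<in> Cset X" using xy unfolding Cset_def by auto
  show "\<forall>u g r. rationalizes X D u g r p f \<and> fechnerian X u g \<longrightarrow> cdf_R (g y x) 0 = pb"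
    using main[OF dom rt _ _ yx xz yz] unfolding pb_def by blast
  show "p x z \<ge> p y z \<longrightarrow>
              (p y z > 1/2 \<longrightarrow> pb = p x z * cdf_pos (f x z) (theta p f y z)) \<and>
              (p y z = 1/2 \<longrightarrow> pb = p x z) \<and>
              (p y z < 1/2 \<longrightarrow> pb = 1 - p z x * cdf_pos (f z x) (theta p f z y))"
    unfolding pb_def by auto
qed

end
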